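(* Let $\Gamma=(V,E)$ be a $2$-connected finite graph and let $$Z_\Gamma(q,v)=\sum_{A\subseteq E}q^{k(A)}v^{|A|},$$ where $k(A)$ is the number of connected components (including isolated vertices) of the spanning subgraph $(V,A)$. Write $Z_\Gamma(q,v)=q\,\widetilde Z_\Gamma(q,v)$ in $\mathbb{C}[q,v]$. Then $\widetilde Z_\Gamma(q,v)$ is irreducible in $\mathbb{C}[q,v]$. The same holds in the variables $(q,y)$ with $y=v+1$.
   Context: A graph is $2$-connected if it has at least three vertices and no vertex whose removal disconnects it. $Z_\Gamma$ is the partition function of the $q$-state Potts model in the Fortuin–Kasteleyn representation; it is divisible by $q$ since $k(A)\ge1$ for all $A$. *)

theory Defs
  imports Complex_Main "HOL-Computational_Algebra.Polynomial_Factorial"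
begin

definition simple_graph :: "'a set \<Rightarrow> 'a set set \<Rightarrow> bool" where
  "simple_graph V E \<longleftrightarrow> finite V \<and> (\<forall>e\<in>E. e \<subseteq> V \<and> card e = 2)"

definition adj :: "'a set set \<Rightarrow> ('a \<times> 'a) set" where
  "adj A = {(x, y). {x, y} \<in> A}"

definition conn_rel :: "'a set \<Rightarrow> 'a set set \<Rightarrow> ('a \<times> 'a) set" where
  "conn_rel V A = {(x, y). x \<in> V \<and> y \<in> V \<and> (x, y) \<in> (adj A)\<^sup>*}"

definition num_components :: "'a set \<Rightarrow> 'a set set \<Rightarrow> nat" where
  "num_components V A = card (V // conn_rel V A)"

definition graph_connected :: "'a set \<Rightarrow> 'a set set \<Rightarrow> bool" where
  "graph_connected V E \<longleftrightarrow> V \<noteq> {} \<and> (\<forall>x\<in>V. \<forall>y\<in>V. (x, y) \<in> (adj E)\<^sup>*)"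

definition delete_vertex_edges :: "'a \<Rightarrow> 'a set set \<Rightarrow> 'a set set" where
  "delete_vertex_edges w E = {e \<in> E. w \<notin> e}"

definition two_connected :: "'a set \<Rightarrow> 'a set set \<Rightarrow> bool" where
  "two_connected V E \<longleftrightarrow> card V \<ge> 3 \<and> graph_connected V E \<and>
     (\<forall>w\<in>V. graph_connected (V - {w}) (delete_vertex_edges w E))"

text \<open>C[q,v] is represented as (C[q])[v], i.e. the type complex poly poly:
  the outer variable is v (resp. y), the coefficients are polynomials in q.\<close>

definition var_q :: "complex poly poly" where
  "var_q = [:[:0, 1:]:]"

definition var_outer :: "complex poly poly" where
  "var_outer = [:0, 1:]"

definition potts_Z :: "'a set \<Rightarrow> 'a set set \<Rightarrow> complex poly poly" where
  "potts_Z V E = (\<Sum>A\<in>Pow E. var_q ^ num_components V A * var_outer ^ card A)"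

text \<open>The same polynomial in the variables (q,y), y = v + 1, i.e. v = y - 1.\<close>
definition potts_Z_y :: "'a set \<Rightarrow> 'a set set \<Rightarrow> complex poly poly" where
  "potts_Z_y V E = (\<Sum>A\<in>Pow E. var_q ^ num_components V A * (var_outer - 1) ^ card A)"

end

theory Submission
  imports Defs "HOL-Computational_Algebra.Fundamental_Theorem_Algebra"
begin

lemma sum_pow_card:
  assumes "finite F"
  shows "(\<Sum>A\<in>Pow F. (x::'b::comm_ring_1) ^ card A) = (1 + x) ^ card F"
  using assms
proof (induction F rule: finite_induct)
  case empty then show ?case by simp
next
  case (insert a F)
  have inj: "inj_on (insert a) (Pow F)" using insert.hyps
    by (smt (verit) PowD inj_on_def insert_absorb insert_ident subset_iff)
  have disj: "Pow F \<inter> insert a ` Pow F = {}" using insert.hyps by auto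
  have fin: "finite (Pow F)" using insert.hyps by simp
  have "(\<Sum>A\<in>Pow (insert a F). x ^ card A) = (\<Sum>A\<in>Pow F. x ^ card A) + (\<Sum>A\<in>insert a ` Pow F. x ^ card A)"
    unfolding Pow_insert by (rule sum.union_disjoint) (use fin disj in auto)
  also have "(\<Sum>A\<in>insert a ` Pow F. x ^ card A) = (\<Sum>A\<in>Pow F. x ^ card (insert a A))"
    by (rule sum.reindex[OF inj, unfolded comp_def])
  also have "\<dots> = (\<Sum>A\<in>Pow F. x * x ^ card A)"
  proof (rule sum.cong)
    fix A assume "A \<in> Pow F"
    then have "card (insert a A) = Suc (card A)" using insert.hyps
      by (meson PowD card_insert_disjoint finite_subset subsetD)
    then show "x ^ card (insert a A) = x * x ^ card A" by simp
  qed simp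
  finally show ?case using insert by (simp add: sum_distrib_left[symmetric] algebra_simps)
qed

lemma sum_neg_one_card:
  assumes "finite F" "F \<noteq> {}"
  shows "(\<Sum>A\<in>Pow F. (-1::'b::comm_ring_1) ^ card A) = 0"
proof -
  have "card F > 0" using assms by (simp add: card_gt_0_iff)
  then show ?thesis using sum_pow_card[OF assms(1), of "-1::'b"] by (simp add: power_0_left)
qed

lemma sum_Pow_split:
  assumes "finite E" "e \<in> E"
  shows "(\<Sum>A\<in>Pow E. h A) = (\<Sum>A\<in>Pow (E - {e}). h A) + (\<Sum>A\<in>Pow (E - {e}). h (insert e A))"
proof -
  have E: "E = insert e (E - {e})" using assms by auto
  have inj: "inj_on (insert e) (Pow (E - {e}))"
    unfolding inj_on_def by blast
  have "(\<Sum>A\<in>Pow E. h A) = (\<Sum>A\<in>Pow (E - {e}) \<union> insert e ` Pow (E - {e}). h A)"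
    by (subst E, subst Pow_insert) simp
  also have "\<dots> = (\<Sum>A\<in>Pow (E - {e}). h A) + (\<Sum>A\<in>insert e ` Pow (E - {e}). h A)"
    by (rule sum.union_disjoint) (use assms in auto)
  also have "(\<Sum>A\<in>insert e ` Pow (E - {e}). h A) = (\<Sum>A\<in>Pow (E - {e}). h (insert e A))"
    by (rule sum.reindex[OF inj, unfolded comp_def])
  finally show ?thesis .
qed

definition matroid :: "'e set \<Rightarrow> ('e set \<Rightarrow> nat) \<Rightarrow> bool" where
  "matroid E r \<longleftrightarrow> finite E \<and> r {} = 0 \<and> (\<forall>A\<subseteq>E. r A \<le> card A) \<and>
     (\<forall>A B. A \<subseteq> B \<longrightarrow> B \<subseteq> E \<longrightarrow> r A \<le> r B) \<and>
     (\<forall>A B. A \<subseteq> E \<longrightarrow> B \<subseteq> E \<longrightarrow> r (A \<union> B) + r (A \<inter> B) \<le> r A + r B)"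

definition mconn :: "'e set \<Rightarrow> ('e set \<Rightarrow> nat) \<Rightarrow> bool" where
  "mconn E r \<longleftrightarrow> (\<forall>X. X \<noteq> {} \<longrightarrow> X \<subset> E \<longrightarrow> r E < r X + r (E - X))"

definition SS :: "'e set \<Rightarrow> ('e set \<Rightarrow> nat) \<Rightarrow> int" where
  "SS E r = (\<Sum>A\<in>Pow E. (-1::int) ^ card A * int (r A))"

definition beta :: "'e set \<Rightarrow> ('e set \<Rightarrow> nat) \<Rightarrow> int" where
  "beta E r = (-1::int) ^ r E * SS E r"

definition con :: "'e \<Rightarrow> ('e set \<Rightarrow> nat) \<Rightarrow> 'e set \<Rightarrow> nat" where
  "con e r A = r (insert e A) - r {e}"

lemma SS_split:
  assumes "matroid E r" "e \<in> E" "E - {e} \<noteq> {}"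
  shows "SS E r = SS (E - {e}) r - SS (E - {e}) (con e r)"
proof -
  have fin: "finite E" using assms unfolding matroid_def by auto
  have mono: "r {e} \<le> r (insert e A)" if "A \<subseteq> E - {e}" for A
  proof -
    have "\<forall>A B. A \<subseteq> B \<longrightarrow> B \<subseteq> E \<longrightarrow> r A \<le> r B" using assms(1) unfolding matroid_def by blast
    moreover have "{e} \<subseteq> insert e A" "insert e A \<subseteq> E" using that assms(2) by auto
    ultimately show ?thesis by blast
  qed
  have "SS E r = SS (E - {e}) r + (\<Sum>A\<in>Pow (E - {e}). (-1::int) ^ card (insert e A) * int (r (insert e A)))"
    unfolding SS_def by (rule sum_Pow_split[OF fin assms(2)])
  also have "(\<Sum>A\<in>Pow (E - {e}). (-1::int) ^ card (insert e A) * int (r (insert e A)))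
      = (\<Sum>A\<in>Pow (E - {e}). - ((-1::int) ^ card A * int (con e r A)) - int (r {e}) * (-1) ^ card A)"
  proof (rule sum.cong)
    fix A assume A: "A \<in> Pow (E - {e})"
    have "finite A" using A fin by (meson PowD finite_Diff finite_subset)
    moreover have "e \<notin> A" using A by auto
    ultimately have c: "card (insert e A) = Suc (card A)" by simp
    have "int (r (insert e A)) = int (con e r A) + int (r {e})"
      unfolding con_def using mono[of A] A by auto
    then show "(-1::int) ^ card (insert e A) * int (r (insert e A)) =
       - ((-1::int) ^ card A * int (con e r A)) - int (r {e}) * (-1) ^ card A"
      by (simp add: c algebra_simps)
  qed simp
  also have "\<dots> = - SS (E - {e}) (con e r) - int (r {e}) * (\<Sum>A\<in>Pow (E - {e}). (-1::int) ^ card A)"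
    unfolding SS_def by (simp add: sum_subtractf sum_negf sum_distrib_left)
  also have "(\<Sum>A\<in>Pow (E - {e}). (-1::int) ^ card A) = 0"
    by (rule sum_neg_one_card) (use fin assms in auto)
  finally show ?thesis by simp
qed

lemma matroid_del:
  assumes "matroid E r" shows "matroid (E - {e}) r"
proof -
  have fin: "finite E" and r0: "r {} = 0" and rc: "\<forall>A\<subseteq>E. r A \<le> card A"
    and mono: "\<forall>A B. A \<subseteq> B \<longrightarrow> B \<subseteq> E \<longrightarrow> r A \<le> r B"
    and sub: "\<forall>A B. A \<subseteq> E \<longrightarrow> B \<subseteq> E \<longrightarrow> r (A \<union> B) + r (A \<inter> B) \<le> r A + r B"
    using assms unfolding matroid_def by blast+
  show ?thesis unfolding matroid_def
  proof (intro conjI allI impI)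
    show "finite (E - {e})" using fin by simp
    show "r {} = 0" by (rule r0)
    fix A assume "A \<subseteq> E - {e}" then show "r A \<le> card A" using rc by blast
  next
    fix A B assume "A \<subseteq> B" "B \<subseteq> E - {e}" then show "r A \<le> r B" using mono by blast
  next
    fix A B assume "A \<subseteq> E - {e}" "B \<subseteq> E - {e}" then show "r (A \<union> B) + r (A \<inter> B) \<le> r A + r B"
      using sub by blast
  qed
qed

lemma matroid_con:
  assumes "matroid E r" "e \<in> E" shows "matroid (E - {e}) (con e r)"
proof -
  have fin: "finite E" and r0: "r {} = 0" and rc: "\<forall>A\<subseteq>E. r A \<le> card A"
    and mono: "\<forall>A B. A \<subseteq> B \<longrightarrow> B \<subseteq> E \<longrightarrow> r A \<le> r B"
    and sub: "\<forall>A B. A \<subseteq> E \<longrightarrow> B \<subseteq> E \<longrightarrow> r (A \<union> B) + r (A \<inter> B) \<le> r A + r B"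
    using assms unfolding matroid_def by blast+
  have ge: "r {e} \<le> r (insert e A)" if "A \<subseteq> E" for A
  proof -
    have "{e} \<subseteq> insert e A" "insert e A \<subseteq> E" using that assms(2) by auto
    then show ?thesis using mono by blast
  qed
  have sub1: "r (insert e A) \<le> r A + r {e}" if "A \<subseteq> E - {e}" for A
  proof -
    have "A \<subseteq> E" "{e} \<subseteq> E" using that assms(2) by auto
    then have "r (A \<union> {e}) + r (A \<inter> {e}) \<le> r A + r {e}"
      using sub[rule_format, of A "{e}"] by blast
    moreover have "A \<union> {e} = insert e A" "A \<inter> {e} = {}" using that by auto
    ultimately show ?thesis using r0 by simp
  qed
  show ?thesis unfolding matroid_def
  proof (intro conjI allI impI)
    show "finite (E - {e})" using fin by simp
    show "con e r {} = 0" unfolding con_def by simp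
  next
    fix A assume A: "A \<subseteq> E - {e}"
    have "r A \<le> card A" using rc A by auto
    then show "con e r A \<le> card A" unfolding con_def using sub1[OF A] by linarith
  next
    fix A B assume AB: "A \<subseteq> B" "B \<subseteq> E - {e}"
    have "insert e A \<subseteq> insert e B" "insert e B \<subseteq> E" using AB assms(2) by auto
    then have "r (insert e A) \<le> r (insert e B)" using mono by simp
    then show "con e r A \<le> con e r B" unfolding con_def by linarith
  next
    fix A B assume A: "A \<subseteq> E - {e}" and B: "B \<subseteq> E - {e}"
    have s1: "insert e A \<subseteq> E" "insert e B \<subseteq> E" using A B assms(2) by auto
    have "r (insert e A \<union> insert e B) + r (insert e A \<inter> insert e B) \<le> r (insert e A) + r (insert e B)"
      by (rule sub[rule_format, OF s1(1) s1(2)])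
    moreover have "insert e A \<union> insert e B = insert e (A \<union> B)" "insert e A \<inter> insert e B = insert e (A \<inter> B)" by auto
    ultimately have "r (insert e (A \<union> B)) + r (insert e (A \<inter> B)) \<le> r (insert e A) + r (insert e B)" by simp
    moreover have "r {e} \<le> r (insert e (A \<union> B))" "r {e} \<le> r (insert e (A \<inter> B))"
      "r {e} \<le> r (insert e A)" "r {e} \<le> r (insert e B)" using ge A B by (meson Diff_subset le_infI1 le_supI subset_trans)+
    ultimately show "con e r (A \<union> B) + con e r (A \<inter> B) \<le> con e r A + con e r B"
      unfolding con_def by linarith
  qed
qed

lemma matroid_facts:
  assumes "matroid E r"
  shows "finite E" "r {} = 0" "\<And>A. A \<subseteq> E \<Longrightarrow> r A \<le> card A"
    "\<And>A B. A \<subseteq> B \<Longrightarrow> B \<subseteq> E \<Longrightarrow> r A \<le> r B"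
    "\<And>A B. A \<subseteq> E \<Longrightarrow> B \<subseteq> E \<Longrightarrow> r (A \<union> B) + r (A \<inter> B) \<le> r A + r B"
  using assms unfolding matroid_def by blast+

lemma beta_rec:
  assumes m: "matroid E r" and e: "e \<in> E" and ne: "E - {e} \<noteq> {}"
    and re: "r {e} = 1" and rd: "r (E - {e}) = r E"
  shows "beta E r = beta (E - {e}) r + beta (E - {e}) (con e r)"
proof -
  have "r {e} \<le> r E" using matroid_facts(4)[OF m, of "{e}" E] e by auto
  then obtain k where k: "r E = Suc k" using re by (cases "r E") auto
  have "insert e (E - {e}) = E" using e by auto
  then have c: "con e r (E - {e}) = k" unfolding con_def using k re by simp
  show ?thesis unfolding beta_def SS_split[OF m e ne] rd c k by (simp add: algebra_simps)
qed

lemma SS_zero_loop: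
  assumes m: "matroid E r" and e: "e \<in> E" and ne: "E - {e} \<noteq> {}" and re: "r {e} = 0"
  shows "SS E r = 0"
proof -
  have "SS (E - {e}) (con e r) = SS (E - {e}) r"
    unfolding SS_def
  proof (rule sum.cong)
    fix A assume A: "A \<in> Pow (E - {e})"
    have s: "A \<subseteq> E" "{e} \<subseteq> E" using A e by auto
    have "r (A \<union> {e}) + r (A \<inter> {e}) \<le> r A + r {e}" by (rule matroid_facts(5)[OF m s])
    moreover have "A \<union> {e} = insert e A" "A \<inter> {e} = {}" using A by auto
    ultimately have "r (insert e A) \<le> r A" using re matroid_facts(2)[OF m] by simp
    moreover have "r A \<le> r (insert e A)" using matroid_facts(4)[OF m, of A "insert e A"] s by auto
    ultimately show "(-1) ^ card A * int (con e r A) = (-1) ^ card A * int (r A)"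
      unfolding con_def using re by simp
  qed simp
  then show ?thesis using SS_split[OF m e ne] by simp
qed

lemma SS_zero_coloop:
  assumes m: "matroid E r" and e: "e \<in> E" and ne: "E - {e} \<noteq> {}" and rd: "r (E - {e}) < r E"
  shows "SS E r = 0"
proof -
  have re: "r {e} \<le> 1" using matroid_facts(3)[OF m, of "{e}"] e by auto
  have key: "r (insert e A) = r A + 1" if A: "A \<subseteq> E - {e}" for A
  proof -
    have s: "A \<subseteq> E" "{e} \<subseteq> E" using A e by auto
    have "r (A \<union> {e}) + r (A \<inter> {e}) \<le> r A + r {e}" by (rule matroid_facts(5)[OF m s])
    moreover have "A \<union> {e} = insert e A" "A \<inter> {e} = {}" using A by auto
    ultimately have 1: "r (insert e A) \<le> r A + 1" using re matroid_facts(2)[OF m] by simp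
    have s2: "insert e A \<subseteq> E" "E - {e} \<subseteq> E" using A e by auto
    have "r (insert e A \<union> (E - {e})) + r (insert e A \<inter> (E - {e})) \<le> r (insert e A) + r (E - {e})"
      by (rule matroid_facts(5)[OF m s2])
    moreover have "insert e A \<union> (E - {e}) = E" "insert e A \<inter> (E - {e}) = A" using A e by auto
    ultimately have "r E + r A \<le> r (insert e A) + r (E - {e})" by simp
    then show ?thesis using 1 rd by linarith
  qed
  then have r1: "r {e} = 1" using key[of "{}"] matroid_facts(2)[OF m] by simp
  have "SS (E - {e}) (con e r) = SS (E - {e}) r"
    unfolding SS_def
  proof (rule sum.cong)
    fix A assume A: "A \<in> Pow (E - {e})"
    then show "(-1) ^ card A * int (con e r A) = (-1) ^ card A * int (r A)"
      unfolding con_def using key[of A] r1 by simp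
  qed simp
  then show ?thesis using SS_split[OF m e ne] by simp
qed

lemma beta_nonneg_aux:
  "\<forall>E r. card E = n \<longrightarrow> matroid E r \<longrightarrow> 0 \<le> beta E r"
proof (induction n)
  case 0
  show ?case
  proof (intro allI impI)
    fix E :: "'a set" and r assume "card E = 0" "matroid E r"
    then have "E = {}" using matroid_facts(1)[OF \<open>matroid E r\<close>] by simp
    then show "0 \<le> beta E r" unfolding beta_def SS_def using matroid_facts(2)[OF \<open>matroid E r\<close>] by simp
  qed
next
  case (Suc n)
  show ?case
  proof (intro allI impI)
    fix E :: "'a set" and r assume cE: "card E = Suc n" and m: "matroid E r"
    have fin: "finite E" using matroid_facts(1)[OF m] .
    obtain e where e: "e \<in> E" using cE by (metis card.empty ex_in_conv nat.simps(3))
    have cD: "card (E - {e}) = n" using cE e fin by simp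
    show "0 \<le> beta E r"
    proof (cases "E - {e} = {}")
      case True
      then have E: "E = {e}" using e by auto
      have "r {e} \<le> 1" using matroid_facts(3)[OF m, of "{e}"] E by auto
      then have "r {e} = 0 \<or> r {e} = 1" by auto
      moreover have "Pow {e} = {{}, {e}}" by blast
      then have "SS E r = - int (r {e})"
        unfolding SS_def E using matroid_facts(2)[OF m] by simp
      ultimately show ?thesis unfolding beta_def E by auto
    next
      case ne: False
      show ?thesis
      proof (cases "r {e} = 0")
        case True then show ?thesis unfolding beta_def using SS_zero_loop[OF m e ne] by simp
      next
        case r0: False
        show ?thesis
        proof (cases "r (E - {e}) < r E")
          case True then show ?thesis unfolding beta_def using SS_zero_coloop[OF m e ne] by simp
        next
          case False
          have "r (E - {e}) \<le> r E" using matroid_facts(4)[OF m, of "E - {e}" E] by auto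
          then have rd: "r (E - {e}) = r E" using False by simp
          have "r {e} \<le> 1" using matroid_facts(3)[OF m, of "{e}"] e by auto
          then have re: "r {e} = 1" using r0 by simp
          have "0 \<le> beta (E - {e}) r" using Suc.IH cD matroid_del[OF m] by blast
          moreover have "0 \<le> beta (E - {e}) (con e r)" using Suc.IH cD matroid_con[OF m e] by blast
          ultimately show ?thesis using beta_rec[OF m e ne re rd] by simp
        qed
      qed
    qed
  qed
qed

lemma beta_nonneg: "matroid E r \<Longrightarrow> 0 \<le> beta E r"
  using beta_nonneg_aux by blast

lemma mconnD: "mconn E r \<Longrightarrow> X \<noteq> {} \<Longrightarrow> X \<subset> E \<Longrightarrow> r E < r X + r (E - X)"
  unfolding mconn_def by blast

lemma mconn_rank_pos:
  assumes m: "matroid F s" and c: "mconn F s" and cF: "2 \<le> card F"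
  shows "0 < s F"
proof -
  have fin: "finite F" using matroid_facts(1)[OF m] .
  obtain x where x: "x \<in> F" using cF by (metis card.empty ex_in_conv not_numeral_le_zero)
  have "card (F - {x}) \<ge> 1" using cF x fin by simp
  then have "F - {x} \<noteq> {}" by (metis card.empty not_one_le_zero)
  then have "{x} \<subset> F" using x by auto
  then have "s F < s {x} + s (F - {x})" using mconnD[OF c] by blast
  moreover have "s {x} \<le> s F" "s (F - {x}) \<le> s F"
    using matroid_facts(4)[OF m] x by auto
  ultimately show ?thesis by linarith
qed

lemma tutte_core:
  assumes m: "matroid E r" and c: "mconn E r" and e: "e \<in> E"
    and X1: "X1 \<subseteq> E - {e}" and Y1: "Y1 = E - {e} - X1"
    and s1: "r X1 + r Y1 \<le> r E"
    and P: "P \<subseteq> E - {e}" and Q: "Q = E - {e} - P"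
    and s2: "r (insert e P) + r (insert e Q) \<le> r E + 1"
    and n1: "X1 \<inter> P \<noteq> {}" and n2: "Y1 \<inter> Q \<noteq> {}"
  shows False
proof -
  have a1: "X1 \<subseteq> E" "insert e P \<subseteq> E" using X1 P e by auto
  have "r (X1 \<union> insert e P) + r (X1 \<inter> insert e P) \<le> r X1 + r (insert e P)"
    by (rule matroid_facts(5)[OF m a1])
  moreover have "X1 \<inter> insert e P = X1 \<inter> P" using X1 by auto
  ultimately have i1: "r (X1 \<union> insert e P) + r (X1 \<inter> P) \<le> r X1 + r (insert e P)" by simp
  have a2: "Y1 \<subseteq> E" "insert e Q \<subseteq> E" using Y1 Q e by auto
  have "r (Y1 \<union> insert e Q) + r (Y1 \<inter> insert e Q) \<le> r Y1 + r (insert e Q)"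
    by (rule matroid_facts(5)[OF m a2])
  moreover have "Y1 \<inter> insert e Q = Y1 \<inter> Q" using Y1 by auto
  ultimately have i2: "r (Y1 \<union> insert e Q) + r (Y1 \<inter> Q) \<le> r Y1 + r (insert e Q)" by simp
  have "X1 \<inter> P \<subset> E" using e X1 by auto
  then have "r E < r (X1 \<inter> P) + r (E - (X1 \<inter> P))" using mconnD[OF c n1] by blast
  moreover have "E - (X1 \<inter> P) = Y1 \<union> insert e Q" using X1 Y1 P Q e by auto
  ultimately have c1: "r E < r (X1 \<inter> P) + r (Y1 \<union> insert e Q)" by simp
  have "Y1 \<inter> Q \<subset> E" using e Y1 by auto
  then have "r E < r (Y1 \<inter> Q) + r (E - (Y1 \<inter> Q))" using mconnD[OF c n2] by blast
  moreover have "E - (Y1 \<inter> Q) = X1 \<union> insert e P" using X1 Y1 P Q e by auto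
  ultimately have c2: "r E < r (Y1 \<inter> Q) + r (X1 \<union> insert e P)" by simp
  show False using i1 i2 c1 c2 s1 s2 by linarith
qed

lemma tutte:
  assumes m: "matroid E r" and c: "mconn E r" and e: "e \<in> E"
    and re: "r {e} = 1" and rd: "r (E - {e}) = r E"
    and nd: "\<not> mconn (E - {e}) r" and nc: "\<not> mconn (E - {e}) (con e r)"
  shows False
proof -
  obtain X1 where X1: "X1 \<noteq> {}" "X1 \<subset> E - {e}" and s1': "\<not> r (E - {e}) < r X1 + r (E - {e} - X1)"
    using nd unfolding mconn_def by blast
  define Y1 where "Y1 = E - {e} - X1"
  have s1: "r X1 + r Y1 \<le> r E" using s1' rd Y1_def by simp
  have Y1ne: "Y1 \<noteq> {}" using X1 Y1_def by auto
  obtain X2 where X2: "X2 \<noteq> {}" "X2 \<subset> E - {e}" and s2': "\<not> con e r (E - {e}) < con e r X2 + con e r (E - {e} - X2)"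
    using nc unfolding mconn_def by blast
  define Y2 where "Y2 = E - {e} - X2"
  have Y2ne: "Y2 \<noteq> {}" using X2 Y2_def by auto
  have ge: "r {e} \<le> r (insert e A)" if "A \<subseteq> E" for A
    using matroid_facts(4)[OF m, of "{e}" "insert e A"] that e by auto
  have "insert e (E - {e}) = E" using e by auto
  then have c0: "con e r (E - {e}) = r E - 1" unfolding con_def using re by simp
  have c1: "con e r X2 = r (insert e X2) - 1" unfolding con_def using re by simp
  have c2: "con e r (E - {e} - X2) = r (insert e Y2) - 1" unfolding con_def Y2_def using re by simp
  have g1: "1 \<le> r (insert e X2)" using ge[of X2] X2 re by auto
  have g2: "1 \<le> r (insert e Y2)" using ge[of Y2] Y2_def re by auto
  have g3: "1 \<le> r E" using matroid_facts(4)[OF m, of "{e}" E] e re by auto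
  have s2: "r (insert e X2) + r (insert e Y2) \<le> r E + 1"
    using s2' c0 c1 c2 g1 g2 g3 by linarith
  have s2b: "r (insert e Y2) + r (insert e X2) \<le> r E + 1" using s2 by simp
  have Y2eq: "X2 = E - {e} - Y2" using X2 Y2_def by auto
  have X1s: "X1 \<subseteq> E - {e}" and X2s: "X2 \<subseteq> E - {e}" using X1 X2 by auto
  have Y2s: "Y2 \<subseteq> E - {e}" using Y2_def by auto
  show False
  proof (cases "X1 \<inter> X2 \<noteq> {} \<and> Y1 \<inter> Y2 \<noteq> {}")
    case True
    then have n1: "X1 \<inter> X2 \<noteq> {}" and n2: "Y1 \<inter> Y2 \<noteq> {}" by auto
    show False by (rule tutte_core[OF m c e X1s Y1_def s1 X2s Y2_def s2 n1 n2])
  next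
    case False
    have "X1 \<inter> Y2 \<noteq> {} \<and> Y1 \<inter> X2 \<noteq> {}"
    proof (cases "X1 \<inter> X2 = {}")
      case True
      then have "X1 \<subseteq> Y2" "X2 \<subseteq> Y1" using X1s X2s Y1_def Y2_def by auto
      then show ?thesis using X1 X2 by auto
    next
      case F2: False
      then have "Y1 \<inter> Y2 = {}" using False by auto
      then have "Y1 \<subseteq> X2" "Y2 \<subseteq> X1" using Y1_def Y2_def by auto
      then show ?thesis using Y1ne Y2ne by auto
    qed
    then have n1: "X1 \<inter> Y2 \<noteq> {}" and n2: "Y1 \<inter> X2 \<noteq> {}" by auto
    show False by (rule tutte_core[OF m c e X1s Y1_def s1 Y2s Y2eq s2b n1 n2])
  qed
qed

lemma beta_pos_aux:
  "\<forall>E r. card E = Suc n \<longrightarrow> matroid E r \<longrightarrow> mconn E r \<longrightarrow> 0 < r E \<longrightarrow> 0 < beta E r"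
proof (induction n)
  case 0
  show ?case
  proof (intro allI impI)
    fix E :: "'a set" and r assume cE: "card E = Suc 0" and m: "matroid E r" and pos: "0 < r E"
    have "card E = 1" using cE by simp
    then obtain e where E: "E = {e}" by (rule card_1_singletonE)
    have "r {e} \<le> 1" using matroid_facts(3)[OF m, of "{e}"] E by auto
    then have "r {e} = 1" using pos E by simp
    moreover have "Pow {e} = {{}, {e}}" by blast
    ultimately show "0 < beta E r"
      unfolding beta_def SS_def E using matroid_facts(2)[OF m] by simp
  qed
next
  case (Suc n)
  show ?case
  proof (intro allI impI)
    fix E :: "'a set" and r assume cE: "card E = Suc (Suc n)" and m: "matroid E r"
      and c: "mconn E r" and pos: "0 < r E"
    have fin: "finite E" using matroid_facts(1)[OF m] .
    obtain e where e: "e \<in> E" using cE by (metis card.empty ex_in_conv nat.simps(3))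
    have cD: "card (E - {e}) = Suc n" using cE e fin by simp
    then have ne: "E - {e} \<noteq> {}" by (metis card.empty nat.simps(3))
    have "{e} \<subset> E" using e ne by auto
    then have ce: "r E < r {e} + r (E - {e})" using mconnD[OF c] by blast
    have le1: "r (E - {e}) \<le> r E" "r {e} \<le> r E" using matroid_facts(4)[OF m] e by auto
    have "r {e} \<le> 1" using matroid_facts(3)[OF m, of "{e}"] e by auto
    then have re: "r {e} = 1" using ce le1 by linarith
    have "E - {e} \<subset> E" using e by auto
    then have "r E < r (E - {e}) + r (E - (E - {e}))" by (rule mconnD[OF c ne])
    moreover have "E - (E - {e}) = {e}" using e by auto
    ultimately have rd: "r (E - {e}) = r E" using re le1 by simp
    have rec: "beta E r = beta (E - {e}) r + beta (E - {e}) (con e r)"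
      by (rule beta_rec[OF m e ne re rd])
    have md: "matroid (E - {e}) r" by (rule matroid_del[OF m])
    have mc: "matroid (E - {e}) (con e r)" by (rule matroid_con[OF m e])
    show "0 < beta E r"
    proof (cases "mconn (E - {e}) r")
      case True
      have p2: "0 < r (E - {e})" using rd pos by simp
      have "0 < beta (E - {e}) r" by (rule Suc.IH[rule_format, OF cD md True p2])
      then show ?thesis using rec beta_nonneg[OF mc] by simp
    next
      case False
      then have mcc: "mconn (E - {e}) (con e r)" using tutte[OF m c e re rd] by blast
      have c2: "2 \<le> card (E - {e})"
      proof (rule ccontr)
        assume "\<not> 2 \<le> card (E - {e})"
        then have "card (E - {e}) = 1" using cD by simp
        then obtain f where "E - {e} = {f}" by (rule card_1_singletonE)
        then have "mconn (E - {e}) r" unfolding mconn_def by auto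
        then show False using False by simp
      qed
      have p2: "0 < con e r (E - {e})" by (rule mconn_rank_pos[OF mc mcc c2])
      have "0 < beta (E - {e}) (con e r)" by (rule Suc.IH[rule_format, OF cD mc mcc p2])
      then show ?thesis using rec beta_nonneg[OF md] by simp
    qed
  qed
qed

lemma beta_pos:
  assumes "matroid E r" "mconn E r" "E \<noteq> {}" "0 < r E"
  shows "0 < beta E r"
proof -
  have "finite E" using matroid_facts(1)[OF assms(1)] .
  then obtain n where "card E = Suc n" using assms(3) by (metis card_0_eq not0_implies_Suc)
  then show ?thesis using beta_pos_aux assms by blast
qed

lemma adj_sym: "(x, y) \<in> adj A \<Longrightarrow> (y, x) \<in> adj A"
  unfolding adj_def by (simp add: insert_commute)

lemma sym_adj: "sym (adj A)"
  by (rule symI) (rule adj_sym)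

lemma rtr_sym: "(x, y) \<in> (adj A)\<^sup>* \<Longrightarrow> (y, x) \<in> (adj A)\<^sup>*"
  by (rule symD[OF sym_rtrancl[OF sym_adj]])

lemma adj_mono: "A \<subseteq> B \<Longrightarrow> adj A \<subseteq> adj B"
  unfolding adj_def by auto

lemma rtr_mono: "A \<subseteq> B \<Longrightarrow> (x, y) \<in> (adj A)\<^sup>* \<Longrightarrow> (x, y) \<in> (adj B)\<^sup>*"
  by (rule subsetD[OF rtrancl_mono[OF adj_mono]])

lemma conn_trans: "(x, y) \<in> conn_rel V A \<Longrightarrow> (y, z) \<in> conn_rel V A \<Longrightarrow> (x, z) \<in> conn_rel V A"
  unfolding conn_rel_def using rtrancl_trans[of x y "adj A" z] by simp

lemma equiv_conn: "equiv V (conn_rel V A)"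
proof (rule equivI)
  show "conn_rel V A \<subseteq> V \<times> V" unfolding conn_rel_def by auto
  show "refl_on V (conn_rel V A)" unfolding refl_on_def conn_rel_def by auto
  show "sym (conn_rel V A)"
  proof (rule symI)
    fix a b assume "(a, b) \<in> conn_rel V A"
    then show "(b, a) \<in> conn_rel V A" unfolding conn_rel_def using rtr_sym[of a b A] by simp
  qed
  show "trans (conn_rel V A)"
  proof (rule transI)
    fix x y z assume "(x, y) \<in> conn_rel V A" "(y, z) \<in> conn_rel V A"
    then show "(x, z) \<in> conn_rel V A" by (rule conn_trans)
  qed
qed

lemma conn_rel_sub: "conn_rel V A \<subseteq> V \<times> V"
  unfolding conn_rel_def by auto

lemma conn_rel_mono: "A \<subseteq> B \<Longrightarrow> conn_rel V A \<subseteq> conn_rel V B"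
  unfolding conn_rel_def using rtr_mono[of A B] by auto

lemma finite_quot: "finite V \<Longrightarrow> finite (V // conn_rel V A)"
  by (rule finite_quotient[OF _ conn_rel_sub])

lemma quot_image: "V // R = (\<lambda>x. R `` {x}) ` V"
  unfolding quotient_def by auto

lemma k_le: "finite V \<Longrightarrow> num_components V A \<le> card V"
  unfolding num_components_def quot_image by (rule card_image_le)

lemma k_empty:
  assumes "finite V" shows "num_components V {} = card V"
proof -
  have "adj {} = {}" unfolding adj_def by simp
  then have "(adj {})\<^sup>* = Id" by (metis rtrancl_empty)
  then have "conn_rel V {} = Id_on V" unfolding conn_rel_def Id_on_def by auto
  then have "V // conn_rel V {} = (\<lambda>x. {x}) ` V" unfolding quot_image by auto
  moreover have "inj_on (\<lambda>x. {x}) V" by (auto simp: inj_on_def)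
  ultimately show ?thesis unfolding num_components_def by (simp add: card_image)
qed

lemma k_mono:
  assumes fin: "finite V" and AB: "A \<subseteq> B"
  shows "num_components V B \<le> num_components V A"
proof -
  let ?RA = "conn_rel V A" and ?RB = "conn_rel V B"
  have sub: "?RA \<subseteq> ?RB" by (rule conn_rel_mono[OF AB])
  have "V // ?RB \<subseteq> (\<lambda>C. ?RB `` C) ` (V // ?RA)"
  proof
    fix D assume "D \<in> V // ?RB"
    then obtain x where x: "x \<in> V" "D = ?RB `` {x}" by (auto elim: quotientE)
    have "?RB `` (?RA `` {x}) = ?RB `` {x}"
    proof
      show "?RB `` {x} \<subseteq> ?RB `` (?RA `` {x})"
        by (rule Image_mono) (use equiv_class_self[OF equiv_conn x(1)] in auto)
      show "?RB `` (?RA `` {x}) \<subseteq> ?RB `` {x}"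
      proof
        fix y assume "y \<in> ?RB `` (?RA `` {x})"
        then obtain w where "(x, w) \<in> ?RA" "(w, y) \<in> ?RB" by blast
        then have "(x, w) \<in> ?RB" "(w, y) \<in> ?RB" using sub by blast+
        then have "(x, y) \<in> ?RB" by (rule conn_trans)
        then show "y \<in> ?RB `` {x}" by blast
      qed
    qed
    then have "D = ?RB `` (?RA `` {x})" using x(2) by simp
    then show "D \<in> (\<lambda>C. ?RB `` C) ` (V // ?RA)" using quotientI[OF x(1)] by blast
  qed
  then have "card (V // ?RB) \<le> card ((\<lambda>C. ?RB `` C) ` (V // ?RA))"
    by (rule card_mono[OF finite_imageI[OF finite_quot[OF fin]]])
  also have "\<dots> \<le> card (V // ?RA)" by (rule card_image_le[OF finite_quot[OF fin]])
  finally show ?thesis unfolding num_components_def .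
qed

lemma adj_insert2: "adj (insert {u, v} A) = adj A \<union> {(u, v), (v, u)}"
proof -
  have "{x, y} = {u, v} \<longleftrightarrow> (x = u \<and> y = v) \<or> (x = v \<and> y = u)" for x y :: 'a
    by (rule doubleton_eq_iff)
  then show ?thesis unfolding adj_def by blast
qed

lemma rtr_insert:
  fixes A :: "'a set set" and u v :: 'a
  defines "P \<equiv> (adj A)\<^sup>*"
  defines "W \<equiv> {y. (u, y) \<in> P} \<union> {y. (v, y) \<in> P}"
  shows "(adj (insert {u, v} A))\<^sup>* = P \<union> W \<times> W"
proof
  show "(adj (insert {u, v} A))\<^sup>* \<subseteq> P \<union> W \<times> W"
  proof
    fix p assume "p \<in> (adj (insert {u, v} A))\<^sup>*"
    then obtain x y where p: "p = (x, y)" and xy: "(x, y) \<in> (adj (insert {u, v} A))\<^sup>*" by (cases p) auto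
    have "(x, y) \<in> P \<union> W \<times> W" using xy
    proof (induction rule: rtrancl_induct)
      case base then show ?case unfolding P_def by simp
    next
      case (step y z)
      from step.hyps(2) have "(y, z) \<in> adj A \<or> (y, z) = (u, v) \<or> (y, z) = (v, u)"
        unfolding adj_insert2 by auto
      then show ?case
      proof (elim disjE)
        assume yz: "(y, z) \<in> adj A"
        from step.IH show ?case
        proof
          assume "(x, y) \<in> P" then show ?case using rtrancl_into_rtrancl[OF _ yz] unfolding P_def by blast
        next
          assume "(x, y) \<in> W \<times> W"
          then have "(u, y) \<in> P \<or> (v, y) \<in> P" unfolding W_def by blast
          then have "(u, z) \<in> P \<or> (v, z) \<in> P" using rtrancl_into_rtrancl[OF _ yz] unfolding P_def by blast
          then have "z \<in> W" unfolding W_def by blast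
          then show ?case using \<open>(x, y) \<in> W \<times> W\<close> by auto
        qed
      next
        assume yz: "(y, z) = (u, v)"
        have "u \<in> W" "v \<in> W" unfolding W_def P_def by auto
        from step.IH show ?case
        proof
          assume "(x, y) \<in> P" then have "(x, u) \<in> P" using yz by simp
          then have "(u, x) \<in> P" unfolding P_def by (rule rtr_sym)
          then have "x \<in> W" unfolding W_def by auto
          then show ?case using yz \<open>v \<in> W\<close> by auto
        next
          assume "(x, y) \<in> W \<times> W" then show ?case using yz \<open>v \<in> W\<close> by auto
        qed
      next
        assume yz: "(y, z) = (v, u)"
        have "u \<in> W" "v \<in> W" unfolding W_def P_def by auto
        from step.IH show ?case
        proof
          assume "(x, y) \<in> P" then have "(x, v) \<in> P" using yz by simp
          then have "(v, x) \<in> P" unfolding P_def by (rule rtr_sym)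
          then have "x \<in> W" unfolding W_def by auto
          then show ?case using yz \<open>u \<in> W\<close> by auto
        next
          assume "(x, y) \<in> W \<times> W" then show ?case using yz \<open>u \<in> W\<close> by auto
        qed
      qed
    qed
    then show "p \<in> P \<union> W \<times> W" using p by simp
  qed
next
  have sub: "P \<subseteq> (adj (insert {u, v} A))\<^sup>*"
    unfolding P_def by (rule rtrancl_mono[OF adj_mono]) auto
  have uv: "(u, v) \<in> (adj (insert {u, v} A))\<^sup>*" "(v, u) \<in> (adj (insert {u, v} A))\<^sup>*"
    unfolding adj_insert2 by (rule r_into_rtrancl, simp)+
  have "W \<times> W \<subseteq> (adj (insert {u, v} A))\<^sup>*"
  proof
    fix p assume "p \<in> W \<times> W"
    then obtain x y where p: "p = (x, y)" and x: "x \<in> W" and y: "y \<in> W" by blast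
    have "(u, x) \<in> P \<or> (v, x) \<in> P" using x unfolding W_def by blast
    then have "(x, u) \<in> P \<or> (x, v) \<in> P" unfolding P_def using rtr_sym[of u x A] rtr_sym[of v x A] by blast
    then have cx: "(x, u) \<in> (adj (insert {u, v} A))\<^sup>* \<or> (x, v) \<in> (adj (insert {u, v} A))\<^sup>*"
      using sub by blast
    have "(u, y) \<in> P \<or> (v, y) \<in> P" using y unfolding W_def by blast
    then have cy: "(u, y) \<in> (adj (insert {u, v} A))\<^sup>* \<or> (v, y) \<in> (adj (insert {u, v} A))\<^sup>*"
      using sub by blast
    have xu: "(x, u) \<in> (adj (insert {u, v} A))\<^sup>*"
      using cx
    proof
      assume "(x, v) \<in> (adj (insert {u, v} A))\<^sup>*"
      then show ?thesis using uv(2) by (rule rtrancl_trans)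
    qed
    have uy: "(u, y) \<in> (adj (insert {u, v} A))\<^sup>*"
      using cy
    proof
      assume "(v, y) \<in> (adj (insert {u, v} A))\<^sup>*"
      then show ?thesis using uv(1) by (rule rtrancl_trans[rotated])
    qed
    show "p \<in> (adj (insert {u, v} A))\<^sup>*" using rtrancl_trans[OF xu uy] p by simp
  qed
  then show "P \<union> W \<times> W \<subseteq> (adj (insert {u, v} A))\<^sup>*" using sub by blast
qed

lemma conn_insert:
  assumes u: "u \<in> V" and v: "v \<in> V"
  shows "conn_rel V (insert {u, v} A) = conn_rel V A \<union>
           (conn_rel V A `` {u} \<union> conn_rel V A `` {v}) \<times> (conn_rel V A `` {u} \<union> conn_rel V A `` {v})"
  unfolding conn_rel_def rtr_insert using u v by auto

lemma class_eq:
  assumes "y \<in> conn_rel V A `` {x}"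
  shows "conn_rel V A `` {y} = conn_rel V A `` {x}"
proof -
  have "(x, y) \<in> conn_rel V A" using assms by simp
  then show ?thesis using equiv_class_eq_iff[OF equiv_conn] by metis
qed

lemma class_self: "x \<in> V \<Longrightarrow> x \<in> conn_rel V A `` {x}"
  by (rule equiv_class_self[OF equiv_conn])

lemma quot_insert:
  fixes V :: "'a set" and A :: "'a set set" and u v :: 'a
  assumes u: "u \<in> V" and v: "v \<in> V"
  defines "R \<equiv> conn_rel V A"
  defines "U \<equiv> R `` {u} \<union> R `` {v}"
  shows "V // conn_rel V (insert {u, v} A) = insert U (V // R - {R `` {u}, R `` {v}})"
proof -
  let ?R' = "conn_rel V (insert {u, v} A)"
  have R': "?R' = R \<union> U \<times> U" unfolding R_def U_def by (rule conn_insert[OF u v])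
  have cls: "?R' `` {x} = (if x \<in> U then U else R `` {x})" if x: "x \<in> V" for x
  proof (cases "x \<in> U")
    case True
    then have "x \<in> R `` {u} \<or> x \<in> R `` {v}" unfolding U_def by blast
    then have "R `` {x} = R `` {u} \<or> R `` {x} = R `` {v}"
      unfolding R_def using class_eq[of x V A u] class_eq[of x V A v] by blast
    then have sub: "R `` {x} \<subseteq> U" unfolding U_def by blast
    have "?R' `` {x} = R `` {x} \<union> (U \<times> U) `` {x}" unfolding R' by blast
    also have "(U \<times> U) `` {x} = U" using True by blast
    finally have "?R' `` {x} = R `` {x} \<union> U" .
    then have "?R' `` {x} = U" using sub by blast
    then show ?thesis using True by simp
  next
    case False
    have "?R' `` {x} = R `` {x} \<union> (U \<times> U) `` {x}" unfolding R' by blast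
    also have "(U \<times> U) `` {x} = {}" using False by blast
    finally show ?thesis using False by simp
  qed
  have uU: "u \<in> U" unfolding U_def R_def using class_self[OF u, of A] by blast
  show ?thesis
  proof
    show "V // ?R' \<subseteq> insert U (V // R - {R `` {u}, R `` {v}})"
    proof
      fix C assume "C \<in> V // ?R'"
      then obtain x where x: "x \<in> V" "C = ?R' `` {x}" by (metis quotientE)
      show "C \<in> insert U (V // R - {R `` {u}, R `` {v}})"
      proof (cases "x \<in> U")
        case True then show ?thesis using cls[OF x(1)] x(2) by simp
      next
        case False
        have xin: "x \<in> R `` {x}" unfolding R_def by (rule class_self[OF x(1)])
        have "R `` {x} \<noteq> R `` {u}" "R `` {x} \<noteq> R `` {v}" using False xin unfolding U_def by auto
        moreover have "R `` {x} \<in> V // R" by (rule quotientI[OF x(1)])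
        ultimately show ?thesis using cls[OF x(1)] x(2) False by simp
      qed
    qed
    show "insert U (V // R - {R `` {u}, R `` {v}}) \<subseteq> V // ?R'"
    proof
      fix C assume C: "C \<in> insert U (V // R - {R `` {u}, R `` {v}})"
      show "C \<in> V // ?R'"
      proof (cases "C = U")
        case True
        then have "C = ?R' `` {u}" using cls[OF u] uU by simp
        then show ?thesis using quotientI[OF u] by simp
      next
        case False
        then have C2: "C \<in> V // R" "C \<noteq> R `` {u}" "C \<noteq> R `` {v}" using C by auto
        then obtain x where x: "x \<in> V" "C = R `` {x}" by (metis quotientE)
        have "x \<notin> U"
        proof
          assume "x \<in> U"
          then have "x \<in> R `` {u} \<or> x \<in> R `` {v}" unfolding U_def by blast
          then have "R `` {x} = R `` {u} \<or> R `` {x} = R `` {v}"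
            unfolding R_def using class_eq[of x V A u] class_eq[of x V A v] by blast
          then show False using C2 x by auto
        qed
        then have "C = ?R' `` {x}" using cls[OF x(1)] x(2) by simp
        then show ?thesis using quotientI[OF x(1)] by simp
      qed
    qed
  qed
qed

lemma k_insert_conn:
  assumes u: "u \<in> V" and v: "v \<in> V" and c: "(u, v) \<in> conn_rel V A"
  shows "num_components V (insert {u, v} A) = num_components V A"
proof -
  let ?R = "conn_rel V A"
  have "?R `` {v} = ?R `` {u}" using class_eq[of v V A u] c by simp
  then have "V // conn_rel V (insert {u, v} A) = insert (?R `` {u}) (V // ?R - {?R `` {u}})"
    using quot_insert[OF u v, of A] by simp
  also have "\<dots> = V // ?R" using quotientI[OF u, of ?R] by auto
  finally show ?thesis unfolding num_components_def by simp
qed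

lemma k_insert_nconn:
  assumes fin: "finite V" and u: "u \<in> V" and v: "v \<in> V" and c: "(u, v) \<notin> conn_rel V A"
  shows "num_components V (insert {u, v} A) + 1 = num_components V A"
proof -
  let ?R = "conn_rel V A"
  let ?U = "?R `` {u} \<union> ?R `` {v}"
  have ne: "?R `` {u} \<noteq> ?R `` {v}"
    using equiv_class_eq_iff[OF equiv_conn, of u v V A] u v c by simp
  have notin: "?U \<notin> V // ?R - {?R `` {u}, ?R `` {v}}"
  proof
    assume "?U \<in> V // ?R - {?R `` {u}, ?R `` {v}}"
    then have "?U \<in> V // ?R" by blast
    then obtain x where x: "x \<in> V" "?U = ?R `` {x}" by (metis quotientE)
    have "u \<in> ?R `` {x}" "v \<in> ?R `` {x}" using x(2) class_self[OF u] class_self[OF v] by auto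
    then have "?R `` {u} = ?R `` {x}" "?R `` {v} = ?R `` {x}" using class_eq[of u V A x] class_eq[of v V A x] by simp+
    then show False using ne by simp
  qed
  have fq: "finite (V // ?R)" by (rule finite_quot[OF fin])
  have sub: "{?R `` {u}, ?R `` {v}} \<subseteq> V // ?R" using quotientI[OF u] quotientI[OF v] by auto
  have c2: "card {?R `` {u}, ?R `` {v}} = 2" using ne by simp
  have e1: "card (V // conn_rel V (insert {u, v} A)) = card (V // ?R - {?R `` {u}, ?R `` {v}}) + 1"
    unfolding quot_insert[OF u v] using notin fq by simp
  have e2: "card (V // ?R - {?R `` {u}, ?R `` {v}}) = card (V // ?R) - 2"
    using card_Diff_subset[OF _ sub] c2 by simp
  have e3: "card (V // ?R) \<ge> 2" using card_mono[OF fq sub] c2 by simp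
  show ?thesis unfolding num_components_def using e1 e2 e3 by simp
qed

lemma edge_form:
  assumes "simple_graph V E" "e \<in> E"
  obtains u v where "e = {u, v}" "u \<noteq> v" "u \<in> V" "v \<in> V"
proof -
  have "e \<subseteq> V" "card e = 2" using assms unfolding simple_graph_def by auto
  then show ?thesis using that by (metis card_2_iff insert_subset)
qed

lemma finite_E: "simple_graph V E \<Longrightarrow> finite E"
  unfolding simple_graph_def by (meson Pow_iff finite_Pow_iff rev_finite_subset subsetI)

lemma k_insert_bounds:
  assumes g: "simple_graph V E" and e: "e \<in> E"
  shows "num_components V (insert e A) \<le> num_components V A"
    "num_components V A \<le> num_components V (insert e A) + 1"
proof -
  have fin: "finite V" using g unfolding simple_graph_def by auto
  obtain u v where uv: "e = {u, v}" "u \<in> V" "v \<in> V" using edge_form[OF g e] by metis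
  have "num_components V (insert e A) \<le> num_components V A \<and>
    num_components V A \<le> num_components V (insert e A) + 1"
  proof (cases "(u, v) \<in> conn_rel V A")
    case True then show ?thesis using k_insert_conn[OF uv(2,3) True] uv(1) by simp
  next
    case False then show ?thesis using k_insert_nconn[OF fin uv(2,3) False] uv(1) by simp
  qed
  then show "num_components V (insert e A) \<le> num_components V A"
    "num_components V A \<le> num_components V (insert e A) + 1" by auto
qed

lemma k_card:
  assumes g: "simple_graph V E" and A: "A \<subseteq> E"
  shows "card V \<le> num_components V A + card A"
proof -
  have fin: "finite V" using g unfolding simple_graph_def by auto
  have "finite A" using A finite_E[OF g] by (rule finite_subset)
  then show ?thesis using A
  proof (induction A rule: finite_induct)
    case empty then show ?case using k_empty[OF fin] by simp
  next
    case (insert e F)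
    have "card V \<le> num_components V F + card F" using insert by simp
    moreover have "num_components V F \<le> num_components V (insert e F) + 1"
      using k_insert_bounds(2)[OF g, of e F] insert.prems by simp
    ultimately show ?case using insert.hyps by simp
  qed
qed

lemma submod_aux:
  assumes g: "simple_graph V E" and D: "finite D" "D \<subseteq> E" and CA: "C \<subseteq> A"
  shows "num_components V A + num_components V (C \<union> D) \<le> num_components V (A \<union> D) + num_components V C"
  using D
proof (induction D rule: finite_induct)
  case empty then show ?case by simp
next
  case (insert e D)
  have fin: "finite V" using g unfolding simple_graph_def by auto
  have IH: "num_components V A + num_components V (C \<union> D) \<le> num_components V (A \<union> D) + num_components V C"
    using insert by simp
  obtain u v where uv: "e = {u, v}" "u \<in> V" "v \<in> V" using edge_form[OF g, of e] insert.prems by (metis insert_subset)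
  have e1: "C \<union> insert e D = insert {u, v} (C \<union> D)" "A \<union> insert e D = insert {u, v} (A \<union> D)"
    using uv(1) by auto
  have sub: "C \<union> D \<subseteq> A \<union> D" using CA by auto
  show ?case
  proof (cases "(u, v) \<in> conn_rel V (C \<union> D)")
    case True
    then have c2: "(u, v) \<in> conn_rel V (A \<union> D)" using conn_rel_mono[OF sub] by blast
    then show ?thesis unfolding e1 using k_insert_conn[OF uv(2,3) c2] k_insert_conn[OF uv(2,3) True] IH by simp
  next
    case nc: False
    show ?thesis
    proof (cases "(u, v) \<in> conn_rel V (A \<union> D)")
      case True
      then show ?thesis unfolding e1 using k_insert_conn[OF uv(2,3) True] k_insert_nconn[OF fin uv(2,3) nc] IH
        by simp
    next
      case False
      then show ?thesis unfolding e1 using k_insert_nconn[OF fin uv(2,3) False] k_insert_nconn[OF fin uv(2,3) nc] IH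
        by simp
    qed
  qed
qed

lemma k_submod:
  assumes g: "simple_graph V E" and A: "A \<subseteq> E" and B: "B \<subseteq> E"
  shows "num_components V A + num_components V B \<le> num_components V (A \<union> B) + num_components V (A \<inter> B)"
proof -
  have D: "finite (B - A)" "B - A \<subseteq> E" using B finite_E[OF g] by (auto intro: finite_subset)
  have "num_components V A + num_components V ((A \<inter> B) \<union> (B - A)) \<le> num_components V (A \<union> (B - A)) + num_components V (A \<inter> B)"
    by (rule submod_aux[OF g D]) auto
  moreover have "(A \<inter> B) \<union> (B - A) = B" "A \<union> (B - A) = A \<union> B" by auto
  ultimately show ?thesis by simp
qed

definition grk :: "'a set \<Rightarrow> 'a set set \<Rightarrow> nat" where
  "grk V A = card V - num_components V A"

lemma matroid_graph:
  assumes g: "simple_graph V E"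
  shows "matroid E (grk V)"
proof -
  have fin: "finite V" using g unfolding simple_graph_def by auto
  have kle: "\<And>A. num_components V A \<le> card V" by (rule k_le[OF fin])
  show ?thesis unfolding matroid_def
  proof (intro conjI allI impI)
    show "finite E" by (rule finite_E[OF g])
    show "grk V {} = 0" unfolding grk_def using k_empty[OF fin] by simp
  next
    fix A assume "A \<subseteq> E"
    then have "card V \<le> num_components V A + card A" by (rule k_card[OF g])
    then show "grk V A \<le> card A" unfolding grk_def by linarith
  next
    fix A B assume AB: "A \<subseteq> B" "B \<subseteq> E"
    have "num_components V B \<le> num_components V A" by (rule k_mono[OF fin AB(1)])
    then show "grk V A \<le> grk V B" unfolding grk_def by linarith
  next
    fix A B assume "A \<subseteq> E" "B \<subseteq> E"
    then have "num_components V A + num_components V B \<le> num_components V (A \<union> B) + num_components V (A \<inter> B)"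
      by (rule k_submod[OF g])
    then show "grk V (A \<union> B) + grk V (A \<inter> B) \<le> grk V A + grk V B"
      unfolding grk_def using kle[of A] kle[of B] kle[of "A \<union> B"] kle[of "A \<inter> B"] by linarith
  qed
qed

lemma k_connected:
  assumes "graph_connected V E"
  shows "num_components V E = 1"
proof -
  have ne: "V \<noteq> {}" and c: "\<forall>x\<in>V. \<forall>y\<in>V. (x, y) \<in> (adj E)\<^sup>*" using assms unfolding graph_connected_def by auto
  have "conn_rel V E = V \<times> V" unfolding conn_rel_def using c by auto
  then have "V // conn_rel V E = {V}" unfolding quot_image using ne by auto
  then show ?thesis unfolding num_components_def by simp
qed

lemma closed_rtr:
  assumes "(p, q) \<in> R\<^sup>*" "p \<in> D" "\<forall>a b. (a, b) \<in> R \<longrightarrow> a \<in> D \<longrightarrow> b \<in> D"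
  shows "q \<in> D"
  using assms(1,2)
proof (induction rule: rtrancl_induct)
  case base then show ?case by simp
next
  case (step y z) then show ?case using assms(3) by blast
qed

lemma class_triv:
  assumes x: "x \<in> V" and nx: "x \<notin> \<Union>X"
  shows "conn_rel V X `` {x} = {x}"
proof
  show "{x} \<subseteq> conn_rel V X `` {x}" using class_self[OF x] by blast
  show "conn_rel V X `` {x} \<subseteq> {x}"
  proof
    fix y assume "y \<in> conn_rel V X `` {x}"
    then have "(x, y) \<in> (adj X)\<^sup>*" unfolding conn_rel_def by simp
    then show "y \<in> {x}"
    proof (cases rule: converse_rtranclE)
      case base then show ?thesis by simp
    next
      case (step z)
      then have "{x, z} \<in> X" unfolding adj_def by simp
      then show ?thesis using nx by blast
    qed
  qed
qed

lemma class_in_cover: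
  assumes "y \<in> conn_rel V X `` {x}"
  shows "y = x \<or> y \<in> \<Union>X"
proof -
  have "(x, y) \<in> (adj X)\<^sup>*" using assms unfolding conn_rel_def by simp
  then show ?thesis
  proof (cases rule: rtranclE)
    case base then show ?thesis by simp
  next
    case (step z)
    then have "{z, y} \<in> X" unfolding adj_def by simp
    then show ?thesis by blast
  qed
qed

lemma class_nontriv:
  assumes g: "simple_graph V E" and XE: "X \<subseteq> E" and x: "x \<in> \<Union>X"
  shows "\<exists>z\<in>conn_rel V X `` {x}. z \<noteq> x"
proof -
  obtain f where f: "f \<in> X" "x \<in> f" using x by blast
  obtain a b where ab: "f = {a, b}" "a \<noteq> b" "a \<in> V" "b \<in> V" using edge_form[OF g] f XE by blast
  show ?thesis
  proof (cases "x = a")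
    case True
    then have "(x, b) \<in> adj X" using f ab unfolding adj_def by simp
    then have "b \<in> conn_rel V X `` {x}" unfolding conn_rel_def using True ab by auto
    then show ?thesis using True ab(2) by (intro bexI[of _ b]) auto
  next
    case False
    then have xb: "x = b" using f ab by simp
    then have "(x, a) \<in> adj X" using f ab unfolding adj_def by (simp add: insert_commute)
    then have "a \<in> conn_rel V X `` {x}" unfolding conn_rel_def using xb ab by auto
    then show ?thesis using xb ab(2) by (intro bexI[of _ a]) auto
  qed
qed

lemma key_two:
  assumes g: "simple_graph V E" and tc: "two_connected V E"
    and XE: "X \<subseteq> E" and Y: "Y = E - X" and Yne: "Y \<noteq> {}"
    and x: "x \<in> V" and xX: "x \<in> \<Union>X"
  shows "2 \<le> card (conn_rel V X `` {x} \<inter> (\<Union>X \<inter> \<Union>Y))"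
proof (rule ccontr)
  define C where "C = conn_rel V X `` {x}"
  define S where "S = \<Union>X \<inter> \<Union>Y"
  assume "\<not> 2 \<le> card (conn_rel V X `` {x} \<inter> (\<Union>X \<inter> \<Union>Y))"
  then have lt: "card (C \<inter> S) < 2" unfolding C_def S_def by simp
  have finV: "finite V" using g unfolding simple_graph_def by auto
  have CV: "C \<subseteq> V" unfolding C_def conn_rel_def by auto
  have CX: "C \<subseteq> \<Union>X"
  proof
    fix y assume "y \<in> C"
    then have "y = x \<or> y \<in> \<Union>X" unfolding C_def by (rule class_in_cover)
    then show "y \<in> \<Union>X" using xX by auto
  qed
  have xC: "x \<in> C" unfolding C_def by (rule class_self[OF x])
  obtain s where s: "s \<in> V" "C \<inter> S \<subseteq> {s}"
  proof (cases "C \<inter> S = {}")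
    case True then show ?thesis using that[of x] x by blast
  next
    case False
    have "finite (C \<inter> S)" using CV finV by (meson finite_Int finite_subset)
    then have "card (C \<inter> S) = 1" using False lt by (simp add: card_gt_0_iff less_2_cases_iff)
    then obtain t where "C \<inter> S = {t}" by (rule card_1_singletonE)
    then show ?thesis using that[of t] CV by blast
  qed
  obtain z where z: "z \<in> C" "z \<noteq> x" using class_nontriv[OF g XE xX] unfolding C_def by blast
  obtain c where c: "c \<in> C" "c \<noteq> s" using xC z by blast
  obtain f where f: "f \<in> Y" using Yne by blast
  then have fE: "f \<in> E" using Y by simp
  obtain a b where ab: "f = {a, b}" "a \<noteq> b" "a \<in> V" "b \<in> V" using edge_form[OF g fE] by blast
  have inS: "p \<in> C \<Longrightarrow> p \<in> f \<Longrightarrow> p = s" for p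
  proof -
    assume "p \<in> C" "p \<in> f"
    then have "p \<in> S" unfolding S_def using CX f by blast
    then show "p = s" using s(2) \<open>p \<in> C\<close> by blast
  qed
  obtain d where d: "d \<in> V" "d \<notin> C" "d \<noteq> s"
  proof (cases "a \<notin> C \<and> a \<noteq> s")
    case True then show ?thesis using that[of a] ab by blast
  next
    case F1: False
    then have "a = s" using inS[of a] ab by blast
    show ?thesis
    proof (cases "b \<notin> C \<and> b \<noteq> s")
      case True then show ?thesis using that[of b] ab by blast
    next
      case False
      then have "b = s" using inS[of b] ab by blast
      then show ?thesis using \<open>a = s\<close> ab by simp
    qed
  qed
  define G' where "G' = delete_vertex_edges s E"
  have conn': "graph_connected (V - {s}) G'"
    using tc s(1) unfolding two_connected_def G'_def by blast
  then have "(c, d) \<in> (adj G')\<^sup>*"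
    unfolding graph_connected_def using c d CV by blast
  moreover have "c \<in> C - {s}" using c by blast
  moreover have "\<forall>p q. (p, q) \<in> adj G' \<longrightarrow> p \<in> C - {s} \<longrightarrow> q \<in> C - {s}"
  proof (intro allI impI)
    fix p q assume pq: "(p, q) \<in> adj G'" and p: "p \<in> C - {s}"
    then have e: "{p, q} \<in> E" "s \<notin> {p, q}" unfolding adj_def G'_def delete_vertex_edges_def by auto
    have qV: "q \<in> V" using e(1) g unfolding simple_graph_def by blast
    show "q \<in> C - {s}"
    proof (cases "{p, q} \<in> X")
      case True
      then have "(p, q) \<in> adj X" unfolding adj_def by simp
      moreover have "(x, p) \<in> (adj X)\<^sup>*" using p unfolding C_def conn_rel_def by simp
      ultimately have "(x, q) \<in> (adj X)\<^sup>*" by (metis rtrancl_into_rtrancl)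
      then have "q \<in> C" unfolding C_def conn_rel_def using x qV by simp
      then show ?thesis using e(2) by blast
    next
      case False
      then have "{p, q} \<in> Y" using Y e(1) by simp
      then have "p \<in> \<Union>Y" by blast
      moreover have "p \<in> \<Union>X" using p CX by blast
      ultimately have "p \<in> C \<inter> S" using p unfolding S_def by blast
      then have "p = s" using s(2) by blast
      then show ?thesis using p by blast
    qed
  qed
  ultimately have "d \<in> C - {s}" by (rule closed_rtr)
  then show False using d by blast
qed

lemma k_count:
  assumes g: "simple_graph V E" and tc: "two_connected V E"
    and XE: "X \<subseteq> E" and Y: "Y = E - X" and Yne: "Y \<noteq> {}"
  shows "2 * num_components V X \<le> 2 * card (V - \<Union>X) + card (\<Union>X \<inter> \<Union>Y)"
proof -
  define R where "R = conn_rel V X"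
  define S where "S = \<Union>X \<inter> \<Union>Y"
  define NX where "NX = {C \<in> V // R. C \<subseteq> \<Union>X}"
  have finV: "finite V" using g unfolding simple_graph_def by auto
  have SV: "S \<subseteq> V" unfolding S_def using g XE unfolding simple_graph_def by blast
  have finS: "finite S" using SV finV by (rule finite_subset)
  have finQ: "finite (V // R)" unfolding R_def by (rule finite_quot[OF finV])
  have finN: "finite NX" unfolding NX_def using finQ by simp
  have sub: "V // R \<subseteq> (\<lambda>x. {x}) ` (V - \<Union>X) \<union> NX"
  proof
    fix C assume C: "C \<in> V // R"
    then obtain x where x: "x \<in> V" "C = R `` {x}" by (metis quotientE)
    show "C \<in> (\<lambda>x. {x}) ` (V - \<Union>X) \<union> NX"
    proof (cases "x \<in> \<Union>X")
      case False
      then have "C = {x}" using class_triv[OF x(1) False] x(2) unfolding R_def by simp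
      then show ?thesis using x(1) False by blast
    next
      case True
      have "C \<subseteq> \<Union>X"
      proof
        fix y assume "y \<in> C"
        then have "y \<in> conn_rel V X `` {x}" using x(2) unfolding R_def by simp
        then have "y = x \<or> y \<in> \<Union>X" by (rule class_in_cover)
        then show "y \<in> \<Union>X" using True by auto
      qed
      then show ?thesis using C unfolding NX_def by blast
    qed
  qed
  have k1: "card (V // R) \<le> card (V - \<Union>X) + card NX"
  proof -
    have "card (V // R) \<le> card ((\<lambda>x. {x}) ` (V - \<Union>X) \<union> NX)"
      by (rule card_mono[OF _ sub]) (use finV finN in simp)
    also have "\<dots> \<le> card ((\<lambda>x. {x}) ` (V - \<Union>X)) + card NX" by (rule card_Un_le)
    also have "card ((\<lambda>x. {x}) ` (V - \<Union>X)) \<le> card (V - \<Union>X)" by (rule card_image_le) (use finV in simp)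
    finally show ?thesis by simp
  qed
  have two: "2 \<le> card (C \<inter> S)" if C: "C \<in> NX" for C
  proof -
    have C1: "C \<in> V // R" "C \<subseteq> \<Union>X" using C unfolding NX_def by auto
    then obtain x where x: "x \<in> V" "C = R `` {x}" by (metis quotientE)
    have "x \<in> C" using x class_self[OF x(1)] unfolding R_def by simp
    then have "x \<in> \<Union>X" using C1 by blast
    then show ?thesis using key_two[OF g tc XE Y Yne x(1)] x(2) unfolding R_def S_def by simp
  qed
  have disj: "\<forall>C\<in>NX. \<forall>D\<in>NX. C \<noteq> D \<longrightarrow> (C \<inter> S) \<inter> (D \<inter> S) = {}"
  proof (intro ballI impI)
    fix C D assume "C \<in> NX" "D \<in> NX" "C \<noteq> D"
    then have "C \<in> V // R" "D \<in> V // R" unfolding NX_def by auto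
    then have "C = D \<or> C \<inter> D = {}" unfolding R_def by (rule quotient_disj[OF equiv_conn])
    then show "(C \<inter> S) \<inter> (D \<inter> S) = {}" using \<open>C \<noteq> D\<close> by blast
  qed
  have "2 * card NX = (\<Sum>C\<in>NX. 2)" by simp
  also have "\<dots> \<le> (\<Sum>C\<in>NX. card (C \<inter> S))" by (rule sum_mono) (rule two)
  also have "\<dots> = card (\<Union>C\<in>NX. C \<inter> S)"
    by (rule card_UN_disjoint[symmetric]) (use finN finS disj in auto)
  also have "\<dots> \<le> card S" by (rule card_mono[OF finS]) blast
  finally have k2: "2 * card NX \<le> card S" .
  show ?thesis using k1 k2 unfolding num_components_def R_def S_def by linarith
qed

lemma cover_V:
  assumes g: "simple_graph V E" and tc: "two_connected V E" and x: "x \<in> V"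
  shows "x \<in> \<Union>E"
proof -
  have c: "card V \<ge> 3" and gc: "graph_connected V E" using tc unfolding two_connected_def by auto
  have "card (V - {x}) \<ge> 2" using c x g unfolding simple_graph_def by auto
  then obtain y where y: "y \<in> V" "y \<noteq> x" by (metis Diff_iff card.empty ex_in_conv insertI1 not_numeral_le_zero)
  have "(x, y) \<in> (adj E)\<^sup>*" using gc x y unfolding graph_connected_def by blast
  then show ?thesis
  proof (cases rule: converse_rtranclE)
    case base then show ?thesis using y by simp
  next
    case (step z)
    then have "{x, z} \<in> E" unfolding adj_def by simp
    then show ?thesis by blast
  qed
qed

lemma kXY:
  assumes g: "simple_graph V E" and tc: "two_connected V E"
    and XE: "X \<subseteq> E" and Xne: "X \<noteq> {}" and Xp: "X \<noteq> E"
  shows "num_components V X + num_components V (E - X) \<le> card V"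
proof -
  define Y where "Y = E - X"
  have Yne: "Y \<noteq> {}" using XE Xp Y_def by auto
  have YE: "Y \<subseteq> E" and XY: "X = E - Y" using XE Y_def by auto
  have c1: "2 * num_components V X \<le> 2 * card (V - \<Union>X) + card (\<Union>X \<inter> \<Union>Y)"
    by (rule k_count[OF g tc XE Y_def Yne])
  have c2: "2 * num_components V Y \<le> 2 * card (V - \<Union>Y) + card (\<Union>Y \<inter> \<Union>X)"
    by (rule k_count[OF g tc YE XY Xne])
  have finV: "finite V" using g unfolding simple_graph_def by auto
  have cov: "V \<subseteq> \<Union>X \<union> \<Union>Y" using cover_V[OF g tc] XE Y_def by blast
  have eqV: "V = (V - \<Union>X) \<union> ((V - \<Union>Y) \<union> (\<Union>X \<inter> \<Union>Y \<inter> V))" using cov by blast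
  have "card V = card (V - \<Union>X) + card ((V - \<Union>Y) \<union> (\<Union>X \<inter> \<Union>Y \<inter> V))"
    by (subst eqV, rule card_Un_disjoint) (use finV cov in auto)
  also have "card ((V - \<Union>Y) \<union> (\<Union>X \<inter> \<Union>Y \<inter> V)) = card (V - \<Union>Y) + card (\<Union>X \<inter> \<Union>Y \<inter> V)"
    by (rule card_Un_disjoint) (use finV in auto)
  also have "\<Union>X \<inter> \<Union>Y \<inter> V = \<Union>X \<inter> \<Union>Y" using g XE YE unfolding simple_graph_def by blast
  finally have "card V = card (V - \<Union>X) + card (V - \<Union>Y) + card (\<Union>X \<inter> \<Union>Y)" by simp
  moreover have "2 * num_components V Y \<le> 2 * card (V - \<Union>Y) + card (\<Union>X \<inter> \<Union>Y)"
    using c2 by (metis Int_commute)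
  ultimately show ?thesis using c1 unfolding Y_def by linarith
qed

lemma mconn_graph:
  assumes g: "simple_graph V E" and tc: "two_connected V E"
  shows "mconn E (grk V)"
  unfolding mconn_def
proof (intro allI impI)
  fix X assume Xne: "X \<noteq> {}" and Xp: "X \<subset> E"
  have finV: "finite V" using g unfolding simple_graph_def by auto
  have kE: "num_components V E = 1" using tc k_connected unfolding two_connected_def by blast
  have "num_components V X + num_components V (E - X) \<le> card V"
    by (rule kXY[OF g tc]) (use Xne Xp in auto)
  moreover have "num_components V X \<le> card V" "num_components V (E - X) \<le> card V"
    using k_le[OF finV] by auto
  moreover have "card V \<ge> 3" using tc unfolding two_connected_def by auto
  ultimately show "grk V E < grk V X + grk V (E - X)" unfolding grk_def kE by linarith
qed

definition ev1 :: "complex poly poly \<Rightarrow> complex poly" where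
  "ev1 p = map_poly (\<lambda>c. poly c 1) p"

lemma coeff_ev1: "coeff (ev1 p) n = poly (coeff p n) 1"
  unfolding ev1_def by (simp add: coeff_map_poly)

lemma ev1_add: "ev1 (p + q) = ev1 p + ev1 q"
  by (rule poly_eqI) (simp add: coeff_ev1)

lemma ev1_mult: "ev1 (p * q) = ev1 p * ev1 q"
  by (rule poly_eqI) (simp add: coeff_ev1 coeff_mult poly_sum)

lemma ev1_0: "ev1 0 = 0"
  by (rule poly_eqI) (simp add: coeff_ev1)

lemma ev1_1: "ev1 1 = 1"
  by (rule poly_eqI) (simp add: coeff_ev1 coeff_1)

lemma ev1_diff: "ev1 (p - q) = ev1 p - ev1 q"
  by (rule poly_eqI) (simp add: coeff_ev1)

lemma ev1_sum: "ev1 (\<Sum>x\<in>A. f x) = (\<Sum>x\<in>A. ev1 (f x))"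
  by (induction A rule: infinite_finite_induct) (simp_all add: ev1_0 ev1_add)

lemma ev1_power: "ev1 (p ^ n) = ev1 p ^ n"
  by (induction n) (simp_all add: ev1_1 ev1_mult)

lemma ev1_const: "ev1 [:c:] = [:poly c 1:]"
  by (rule poly_eqI) (simp add: coeff_ev1 coeff_pCons split: nat.split)

lemma ev1_var: "ev1 var_outer = [:0, 1:]"
  unfolding var_outer_def by (rule poly_eqI) (simp add: coeff_ev1 coeff_pCons split: nat.split)

lemma ev1_q: "ev1 var_q = 1"
  unfolding var_q_def ev1_const by simp

lemma eisenstein:
  fixes W :: "complex poly poly"
  assumes m: "1 \<le> m" and cm: "coeff W m = 1" and dW: "degree W \<le> m"
    and ev: "ev1 W = [:0, 1:] ^ m"
    and nd: "\<not> [:-1, 1:] ^ 2 dvd coeff W 0"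
  shows "irreducible W"
proof -
  have W0: "W \<noteq> 0" using cm by auto
  have dW': "degree W = m" using cm dW by (metis le_antisym le_degree one_neq_zero)
  have lW: "lead_coeff W = 1" using cm dW' by simp
  have nu: "\<not> W dvd 1"
  proof
    assume "W dvd 1"
    then obtain c where "W = [:c:]" using is_unit_poly_iff by blast
    then show False using dW' m by simp
  qed
  show ?thesis unfolding irreducible_def
  proof (intro conjI allI impI W0 nu)
    fix P Q assume PQ: "W = P * Q"
    have P0: "P \<noteq> 0" and Q0: "Q \<noteq> 0" using PQ W0 by auto
    have deg: "degree P + degree Q = m" using degree_mult_eq[OF P0 Q0] PQ dW' by simp
    have lc: "lead_coeff P * lead_coeff Q = 1" using lead_coeff_mult[of P Q] PQ lW by simp
    have uP: "lead_coeff P dvd 1" by (rule dvdI[of _ _ "lead_coeff Q"]) (use lc in simp)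
    have uQ: "lead_coeff Q dvd 1" by (rule dvdI[of _ _ "lead_coeff P"]) (use lc in \<open>simp add: mult.commute\<close>)
    obtain a where a0: "lead_coeff P = [:a:]" "a dvd 1" using uP is_unit_poly_iff by blast
    then have a: "lead_coeff P = [:a:]" "a \<noteq> 0" by auto
    obtain b where b0: "lead_coeff Q = [:b:]" "b dvd 1" using uQ is_unit_poly_iff by blast
    then have b: "lead_coeff Q = [:b:]" "b \<noteq> 0" by auto
    have degP: "degree (ev1 P) = degree P"
    proof -
      have "coeff (ev1 P) (degree P) = a" using a by (simp add: coeff_ev1)
      then have "degree P \<le> degree (ev1 P)" using a(2) by (simp add: le_degree)
      moreover have "degree (ev1 P) \<le> degree P" unfolding ev1_def by (rule map_poly_degree_leq)
      ultimately show ?thesis by simp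
    qed
    have degQ: "degree (ev1 Q) = degree Q"
    proof -
      have "coeff (ev1 Q) (degree Q) = b" using b by (simp add: coeff_ev1)
      then have "degree Q \<le> degree (ev1 Q)" using b(2) by (simp add: le_degree)
      moreover have "degree (ev1 Q) \<le> degree Q" unfolding ev1_def by (rule map_poly_degree_leq)
      ultimately show ?thesis by simp
    qed
    have evPQ: "ev1 P * ev1 Q = [:0, 1:] ^ m" using ev PQ ev1_mult by simp
    have root0: "poly (ev1 R) 0 = 0" if R: "ev1 R * S = [:0, 1:] ^ m \<or> S * ev1 R = [:0, 1:] ^ m"
      and dR: "0 < degree (ev1 R)" for R S
    proof -
      have "\<not> constant (poly (ev1 R))"
      proof
        assume "constant (poly (ev1 R))"
        then have "\<forall>x. poly (ev1 R) x = poly (ev1 R) 0" unfolding constant_def by blast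
        then have "poly (ev1 R) = poly [:poly (ev1 R) 0:]" by (simp add: fun_eq_iff)
        then have "ev1 R = [:poly (ev1 R) 0:]" using poly_eq_poly_eq_iff by blast
        then have "degree (ev1 R) = 0" by (metis degree_pCons_0)
        then show False using dR by simp
      qed
      then obtain z where z: "poly (ev1 R) z = 0" using fundamental_theorem_of_algebra by blast
      have "poly (ev1 R * S) z = 0" "poly (S * ev1 R) z = 0" using z by (simp_all add: poly_mult)
      then have "poly ([:0, 1:] ^ m) z = 0" using R by metis
      then have "z ^ m = 0" by (simp add: poly_power)
      then have "z = 0" using m by simp
      then show ?thesis using z by simp
    qed
    show "P dvd 1 \<or> Q dvd 1"
    proof (cases "degree P = 0")
      case True
      then have "P = [:lead_coeff P:]" by (metis degree_0_id)
      then show ?thesis using uP is_unit_poly_iff by blast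
    next
      case dP: False
      show ?thesis
      proof (cases "degree Q = 0")
        case True
        then have "Q = [:lead_coeff Q:]" by (metis degree_0_id)
        then show ?thesis using uQ is_unit_poly_iff by blast
      next
        case dQ: False
        have "poly (ev1 P) 0 = 0" by (rule root0[of P "ev1 Q"]) (use evPQ degP dP in auto)
        then have "poly (coeff P 0) 1 = 0" by (simp add: poly_0_coeff_0 coeff_ev1)
        then have dvP: "[:-1, 1:] dvd coeff P 0" using poly_eq_0_iff_dvd by blast
        have "poly (ev1 Q) 0 = 0" by (rule root0[of Q "ev1 P"]) (use evPQ degQ dQ in auto)
        then have "poly (coeff Q 0) 1 = 0" by (simp add: poly_0_coeff_0 coeff_ev1)
        then have dvQ: "[:-1, 1:] dvd coeff Q 0" using poly_eq_0_iff_dvd by blast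
        have "[:-1, 1:] ^ 2 dvd coeff P 0 * coeff Q 0"
          unfolding power2_eq_square by (rule mult_dvd_mono[OF dvP dvQ])
        then have "[:-1, 1:] ^ 2 dvd coeff W 0" using PQ by (simp add: coeff_mult_0)
        then show ?thesis using nd by simp
      qed
    qed
  qed
qed

lemma k_pos:
  assumes "finite V" "V \<noteq> {}"
  shows "1 \<le> num_components V A"
proof -
  obtain x where "x \<in> V" using assms(2) by blast
  then have "conn_rel V A `` {x} \<in> V // conn_rel V A" by (rule quotientI)
  then have "V // conn_rel V A \<noteq> {}" by (metis empty_iff)
  then show ?thesis unfolding num_components_def using finite_quot[OF assms(1)]
    by (simp add: Suc_leI card_gt_0_iff)
qed

lemma int_sum_nonzero:
  assumes g: "simple_graph V E" and tc: "two_connected V E"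
  shows "(\<Sum>A\<in>Pow E. (-1::int) ^ card A * (int (num_components V A) - 1)) \<noteq> 0"
proof -
  have finV: "finite V" using g unfolding simple_graph_def by auto
  have finE: "finite E" by (rule finite_E[OF g])
  have c3: "card V \<ge> 3" using tc unfolding two_connected_def by auto
  then obtain x where x: "x \<in> V" by (metis card.empty ex_in_conv not_numeral_le_zero)
  have Ene: "E \<noteq> {}" using cover_V[OF g tc x] by auto
  have kE: "num_components V E = 1" using tc k_connected unfolding two_connected_def by blast
  have rpos: "0 < grk V E" unfolding grk_def kE using c3 by simp
  have bp: "0 < beta E (grk V)"
    by (rule beta_pos[OF matroid_graph[OF g] mconn_graph[OF g tc] Ene rpos])
  have kle: "\<And>A. num_components V A \<le> card V" by (rule k_le[OF finV])
  have s0: "(\<Sum>A\<in>Pow E. (-1::int) ^ card A) = 0" by (rule sum_neg_one_card[OF finE Ene])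
  have "SS E (grk V) = (\<Sum>A\<in>Pow E. int (card V) * (-1::int) ^ card A - (-1) ^ card A * int (num_components V A))"
    unfolding SS_def grk_def
  proof (rule sum.cong)
    fix A show "(-1::int) ^ card A * int (card V - num_components V A) =
        int (card V) * (- 1) ^ card A - (- 1) ^ card A * int (num_components V A)"
      using kle[of A] by (simp add: of_nat_diff algebra_simps)
  qed simp
  also have "\<dots> = - (\<Sum>A\<in>Pow E. (-1::int) ^ card A * int (num_components V A))"
    by (simp add: sum_subtractf sum_distrib_left[symmetric] s0)
  finally have ss: "SS E (grk V) = - (\<Sum>A\<in>Pow E. (-1::int) ^ card A * int (num_components V A))" .
  have "(\<Sum>A\<in>Pow E. (-1::int) ^ card A * (int (num_components V A) - 1)) =
        (\<Sum>A\<in>Pow E. (-1::int) ^ card A * int (num_components V A)) - (\<Sum>A\<in>Pow E. (-1::int) ^ card A)"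
    by (simp add: algebra_simps sum_subtractf)
  also have "\<dots> = - SS E (grk V)" using ss s0 by simp
  finally show ?thesis using bp unfolding beta_def by auto
qed

lemma pderiv_sum': "pderiv (\<Sum>x\<in>A. f x) = (\<Sum>x\<in>A. pderiv (f x))"
  by (induction A rule: infinite_finite_induct) (simp_all add: pderiv_add)

lemma const_poly_pow: "([:c:] :: 'b::comm_ring_1 poly) ^ n = [:c ^ n:]"
  by (induction n) (simp_all add: mult.commute)

lemma sq_dvd_deriv:
  fixes c0 :: "complex poly"
  assumes "[:-1, 1:] ^ 2 dvd c0"
  shows "poly (pderiv c0) 1 = 0"
proof -
  obtain g where g: "c0 = [:-1, 1:] ^ 2 * g" using assms by (auto elim: dvdE)
  define L :: "complex poly" where "L = [:-1, 1:]"
  have L1: "poly L 1 = 0" unfolding L_def by simp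
  have c: "c0 = L * (L * g)" unfolding g L_def power2_eq_square by (simp only: mult.assoc)
  have "pderiv (L * (L * g)) = L * pderiv (L * g) + (L * g) * pderiv L" by (rule pderiv_mult)
  then have "poly (pderiv c0) 1 = poly L 1 * poly (pderiv (L * g)) 1 + poly L 1 * poly g 1 * poly (pderiv L) 1"
    unfolding c by (simp only: poly_mult poly_add)
  then show ?thesis using L1 by simp
qed

lemma irr_shift:
  fixes W :: "complex poly poly"
  assumes irr: "irreducible W" and hW: "Wd = pcompose W [:1, 1:]"
  shows "irreducible Wd"
proof -
  have hback: "pcompose Wd [:-1, 1:] = W"
  proof -
    have "pcompose [:1, 1:] [:-1, 1:] = ([:0, 1:] :: complex poly poly)"
      by (simp add: pcompose_pCons)
    then show ?thesis unfolding hW pcompose_assoc[symmetric] by simp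
  qed
  have W0: "W \<noteq> 0" and Wnu: "\<not> W dvd 1" using irr unfolding irreducible_def by auto
  have ds: "degree ([:-1, 1:] :: complex poly poly) = 1" by simp
  show ?thesis unfolding irreducible_def
  proof (intro conjI allI impI)
    show "Wd \<noteq> 0" using W0 hback by auto
    show "\<not> Wd dvd 1"
    proof
      assume "Wd dvd 1"
      then obtain c where c: "Wd = [:c:]" "c dvd 1" using is_unit_poly_iff by blast
      then have "W = [:c:]" using hback by simp
      then show False using Wnu c(2) is_unit_poly_iff by blast
    qed
  next
    fix a b assume ab: "Wd = a * b"
    then have "W = pcompose a [:-1, 1:] * pcompose b [:-1, 1:]" using hback by (simp add: pcompose_mult)
    then have "pcompose a [:-1, 1:] dvd 1 \<or> pcompose b [:-1, 1:] dvd 1"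
      using irr unfolding irreducible_def by blast
    moreover have "p dvd 1" if u: "pcompose p [:-1, 1:] dvd 1" for p :: "complex poly poly"
    proof -
      obtain c where c: "pcompose p [:-1, 1:] = [:c:]" "c dvd 1" using u is_unit_poly_iff by blast
      have "degree (pcompose p [:-1, 1:]) = 0" using c by simp
      then have "degree p = 0" using degree_pcompose[of p "[:-1, 1:]"] ds by simp
      then have pc: "p = [:coeff p 0:]" by (metis degree_0_id)
      then have "pcompose p [:-1, 1:] = p" by (metis pcompose_const)
      then show ?thesis using u by simp
    qed
    ultimately show "a dvd 1 \<or> b dvd 1" by blast
  qed
qed

lemma var_outer_m1: "var_outer - 1 = [:-1, 1:]"
  unfolding var_outer_def by (simp add: one_pCons)

lemma var_q_pow: "var_q ^ j = [:[:0, 1:] ^ j:]"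
  unfolding var_q_def by (rule const_poly_pow)

lemma term_degree: "degree (var_q ^ j * (var_outer - 1) ^ c) \<le> c"
proof -
  have "degree (var_q ^ j * (var_outer - 1) ^ c) \<le> degree (var_q ^ j) + degree ((var_outer - 1) ^ c)"
    by (rule degree_mult_le)
  also have "degree (var_q ^ j) = 0" unfolding var_q_pow by simp
  also have "degree ((var_outer - 1) ^ c) \<le> degree (var_outer - 1) * c" by (rule degree_power_le)
  also have "degree (var_outer - 1) = 1" unfolding var_outer_m1 by simp
  finally show ?thesis by simp
qed

lemma term_coeff0: "coeff (var_q ^ j * (var_outer - 1) ^ c) 0 = monom ((-1) ^ c) j"
proof -
  have "coeff (var_q ^ j * (var_outer - 1) ^ c) 0 = coeff (var_q ^ j) 0 * coeff ((var_outer - 1) ^ c) 0"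
    by (rule coeff_mult_0)
  also have "coeff (var_q ^ j) 0 = [:0, 1:] ^ j" unfolding var_q_pow by simp
  also have "coeff ((var_outer - 1) ^ c) 0 = (-1) ^ c" unfolding coeff_0_power var_outer_m1 by simp
  also have "(-1 :: complex poly) ^ c = [:(-1) ^ c:]"
  proof -
    have "(-1 :: complex poly) = [:-1:]" by (simp add: one_pCons)
    then show ?thesis using const_poly_pow[of "-1::complex" c] by simp
  qed
  finally show ?thesis by (simp add: monom_altdef)
qed

lemma x_m1: "([:0, 1:] :: complex poly) - 1 = [:-1, 1:]"
  by (simp add: one_pCons)

lemma ev1_term: "ev1 (var_q ^ j * (var_outer - 1) ^ c) = [:-1, 1:] ^ c"
  unfolding ev1_mult ev1_power ev1_q ev1_diff ev1_1 ev1_var x_m1 by simp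

theorem proposition5p1:
  fixes V :: "'a set" and E :: "'a set set"
  assumes "simple_graph V E" and "two_connected V E"
  shows "(\<forall>Zt. potts_Z V E = var_q * Zt \<longrightarrow> irreducible Zt) \<and>
         (\<forall>Zt. potts_Z_y V E = var_q * Zt \<longrightarrow> irreducible Zt)"
proof -
  note g = assms(1) and tc = assms(2)
  have finV: "finite V" using g unfolding simple_graph_def by auto
  have c3: "card V \<ge> 3" using tc unfolding two_connected_def by auto
  then obtain x0 where x0: "x0 \<in> V" by (metis card.empty ex_in_conv not_numeral_le_zero)
  then have Vne: "V \<noteq> {}" by blast
  have finE: "finite E" by (rule finite_E[OF g])
  have Ene: "E \<noteq> {}" using cover_V[OF g tc x0] by auto
  define m where "m = card E"
  have m1: "1 \<le> m" unfolding m_def using finE Ene by (simp add: Suc_leI card_gt_0_iff)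
  define k where "k = (\<lambda>A. num_components V A)"
  have kpos: "\<And>A. 1 \<le> k A" unfolding k_def by (rule k_pos[OF finV Vne])
  have kE: "k E = 1" unfolding k_def using tc k_connected unfolding two_connected_def by blast
  define T where "T = (\<lambda>A. var_q ^ (k A - 1) * (var_outer - 1) ^ card A)"
  define Wy where "Wy = (\<Sum>A\<in>Pow E. T A)"
  define Wv where "Wv = (\<Sum>A\<in>Pow E. var_q ^ (k A - 1) * var_outer ^ card A)"
  have vq0: "var_q \<noteq> 0" unfolding var_q_def by simp
  have powk: "var_q ^ k A = var_q * var_q ^ (k A - 1)" for A
  proof -
    have "k A = Suc (k A - 1)" using kpos[of A] by simp
    then show ?thesis by (metis power_Suc)
  qed
  have hZy: "potts_Z_y V E = var_q * Wy"
    unfolding potts_Z_y_def Wy_def T_def k_def sum_distrib_left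
    by (rule sum.cong) (simp_all add: powk[unfolded k_def] mult.assoc)
  have hZ: "potts_Z V E = var_q * Wv"
    unfolding potts_Z_def Wv_def k_def sum_distrib_left
    by (rule sum.cong) (simp_all add: powk[unfolded k_def] mult.assoc)
  have degT: "degree (T A) \<le> card A" for A unfolding T_def by (rule term_degree)
  have dW: "degree Wy \<le> m"
    unfolding Wy_def
  proof (rule degree_sum_le)
    show "finite (Pow E)" using finE by simp
    fix A assume "A \<in> Pow E"
    then have "card A \<le> m" unfolding m_def using finE by (simp add: card_mono)
    then show "degree (T A) \<le> m" using degT[of A] by linarith
  qed
  have cm: "coeff Wy m = 1"
  proof -
    have "coeff Wy m = coeff (T E) m + (\<Sum>A\<in>Pow E - {E}. coeff (T A) m)"
      unfolding Wy_def coeff_sum using sum.remove[of "Pow E" E "\<lambda>A. coeff (T A) m"] finE by simp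
    also have "(\<Sum>A\<in>Pow E - {E}. coeff (T A) m) = 0"
    proof (rule sum.neutral, rule ballI)
      fix A assume "A \<in> Pow E - {E}"
      then have "A \<subset> E" by auto
      then have "card A < m" unfolding m_def using finE by (rule psubset_card_mono[rotated])
      then have "degree (T A) < m" using degT[of A] by linarith
      then show "coeff (T A) m = 0" by (rule coeff_eq_0)
    qed
    also have "coeff (T E) m = 1"
    proof -
      have TE: "T E = [:-1, 1:] ^ m" unfolding T_def kE m_def var_outer_m1 by simp
      have "degree (([:-1, 1:] :: complex poly poly) ^ m) = m" by (subst degree_power_eq) simp_all
      then have "coeff (([:-1, 1:] :: complex poly poly) ^ m) m = lead_coeff (([:-1, 1:] :: complex poly poly) ^ m)"
        by simp
      also have "\<dots> = 1" by (simp add: lead_coeff_power)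
      finally show ?thesis unfolding TE .
    qed
    finally show ?thesis by simp
  qed
  have ev: "ev1 Wy = [:0, 1:] ^ m"
  proof -
    have "ev1 Wy = (\<Sum>A\<in>Pow E. [:-1, 1:] ^ card A)"
      unfolding Wy_def ev1_sum T_def ev1_term by simp
    also have "\<dots> = (1 + [:-1, 1:]) ^ m" unfolding m_def by (rule sum_pow_card[OF finE])
    also have "(1 :: complex poly) + [:-1, 1:] = [:0, 1:]" by (simp add: one_pCons)
    finally show ?thesis .
  qed
  have nd: "\<not> [:-1, 1:] ^ 2 dvd coeff Wy 0"
  proof
    assume "[:-1, 1:] ^ 2 dvd coeff Wy 0"
    then have z: "poly (pderiv (coeff Wy 0)) 1 = 0" by (rule sq_dvd_deriv)
    have "coeff Wy 0 = (\<Sum>A\<in>Pow E. monom ((-1) ^ card A) (k A - 1))"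
      unfolding Wy_def coeff_sum T_def term_coeff0 by simp
    then have "poly (pderiv (coeff Wy 0)) 1 = (\<Sum>A\<in>Pow E. of_nat (k A - 1) * (-1) ^ card A)"
      by (simp add: pderiv_sum' pderiv_monom poly_sum poly_monom)
    also have "\<dots> = of_int (\<Sum>A\<in>Pow E. (-1::int) ^ card A * (int (num_components V A) - 1))"
      unfolding of_int_sum
    proof (rule sum.cong)
      fix A show "(of_nat (k A - 1) :: complex) * (-1) ^ card A =
          of_int ((-1::int) ^ card A * (int (num_components V A) - 1))"
        using kpos[of A] unfolding k_def by (simp add: of_nat_diff mult.commute)
    qed simp
    finally have eqF: "poly (pderiv (coeff Wy 0)) 1 =
        of_int (\<Sum>A\<in>Pow E. (-1::int) ^ card A * (int (num_components V A) - 1))" .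
    have "(of_int (\<Sum>A\<in>Pow E. (-1::int) ^ card A * (int (num_components V A) - 1)) :: complex) = 0"
      using eqF z by metis
    then have "(\<Sum>A\<in>Pow E. (-1::int) ^ card A * (int (num_components V A) - 1)) = 0"
      by (simp only: of_int_eq_0_iff)
    then show False using int_sum_nonzero[OF g tc] by simp
  qed
  have irrWy: "irreducible Wy" by (rule eisenstein[OF m1 cm dW ev nd])
  have hWv: "Wv = pcompose Wy [:1, 1:]"
  proof -
    have pc_pow: "pcompose (p ^ n) q = (pcompose p q) ^ n" for p q :: "complex poly poly" and n
      by (induction n) (simp_all add: pcompose_mult pcompose_1)
    have "pcompose (var_outer - 1) [:1, 1:] = var_outer"
      unfolding var_outer_m1 var_outer_def by (simp add: pcompose_pCons one_pCons)
    moreover have "pcompose var_q [:1, 1:] = var_q" unfolding var_q_def by simp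
    ultimately show ?thesis
      unfolding Wy_def Wv_def T_def pcompose_sum by (simp add: pcompose_mult pc_pow)
  qed
  have irrWv: "irreducible Wv" by (rule irr_shift[OF irrWy hWv])
  show ?thesis
  proof (intro conjI allI impI)
    fix Zt assume "potts_Z V E = var_q * Zt"
    then have "Zt = Wv" using hZ vq0 by simp
    then show "irreducible Zt" using irrWv by simp
  next
    fix Zt assume "potts_Z_y V E = var_q * Zt"
    then have "Zt = Wy" using hZy vq0 by simp
    then show "irreducible Zt" using irrWy by simp
  qed
qed

end
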